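(* Let $k$ and $d$ be two positive integers. Let $f$ be any $n$-variable Boolean function such that ${AI}(f)=k$. Let $\delta$ be any $n$-variable Boolean function such that $w_H(\delta)<\min(2^{n-k},2^{d+1}-1)$. Then $|{AI}(f+\delta)-{AI}(f)|\le d$.
   Context: An $n$-variable Boolean function is a map $\mathbb{F}_2^n\to\mathbb{F}_2$, with algebraic degree the degree of its algebraic normal form; $w_H(\delta)$ is the Hamming weight (number of $x$ with $\delta(x)=1$). ${LDA}(h)$ is the minimum algebraic degree of a nonzero $g$ with $h\cdot g=0$, and the algebraic immunity is ${AI}(f)=\min({LDA}(f),{LDA}(1+f))$. *)

theory Defs
  imports Main "HOL-Library.Extended_Nat"
begin

text \<open>An n-variable Boolean function is modelled as a predicate on finite sets of
  indices: a point x of F_2^n is identified with its support, a subset of {..<n}.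
  Values outside the domain Pow {..<n} are irrelevant in all definitions below.\<close>

definition bpoints :: "nat \<Rightarrow> nat set set" where
  "bpoints n = Pow {..<n}"

definition anf_coeff :: "(nat set \<Rightarrow> bool) \<Rightarrow> nat set \<Rightarrow> bool" where
  "anf_coeff f u = odd (card {x. x \<subseteq> u \<and> f x})"

definition alg_deg :: "nat \<Rightarrow> (nat set \<Rightarrow> bool) \<Rightarrow> nat" where
  "alg_deg n f = Max ({card u | u. u \<subseteq> {..<n} \<and> anf_coeff f u} \<union> {0})"

definition bf_nonzero :: "nat \<Rightarrow> (nat set \<Rightarrow> bool) \<Rightarrow> bool" where
  "bf_nonzero n g \<longleftrightarrow> (\<exists>x\<in>bpoints n. g x)"

definition annihilates :: "nat \<Rightarrow> (nat set \<Rightarrow> bool) \<Rightarrow> (nat set \<Rightarrow> bool) \<Rightarrow> bool" where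
  "annihilates n g h \<longleftrightarrow> (\<forall>x\<in>bpoints n. \<not> (h x \<and> g x))"

text \<open>LDA(h): minimum degree of a nonzero annihilator (infinity if none exists).\<close>
definition LDA :: "nat \<Rightarrow> (nat set \<Rightarrow> bool) \<Rightarrow> enat" where
  "LDA n h = Inf {enat (alg_deg n g) | g. bf_nonzero n g \<and> annihilates n g h}"

definition bf_add :: "(nat set \<Rightarrow> bool) \<Rightarrow> (nat set \<Rightarrow> bool) \<Rightarrow> nat set \<Rightarrow> bool" where
  "bf_add f g = (\<lambda>x. f x \<noteq> g x)"

definition bf_one :: "nat set \<Rightarrow> bool" where
  "bf_one = (\<lambda>x. True)"

definition AI :: "nat \<Rightarrow> (nat set \<Rightarrow> bool) \<Rightarrow> enat" where
  "AI n f = min (LDA n f) (LDA n (bf_add bf_one f))"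

definition hweight :: "nat \<Rightarrow> (nat set \<Rightarrow> bool) \<Rightarrow> nat" where
  "hweight n d = card {x \<in> bpoints n. d x}"

end

theory Submission
  imports Defs
begin

definition degle :: "nat \<Rightarrow> (nat set \<Rightarrow> bool) \<Rightarrow> nat \<Rightarrow> bool" where
  "degle n g e \<longleftrightarrow> (\<exists>c::nat set \<Rightarrow> nat. (\<forall>u. c u \<noteq> 0 \<longrightarrow> card u \<le> e) \<and>
     (\<forall>x\<in>bpoints n. g x = odd (\<Sum>u\<in>Pow x. c u)))"

lemma finite_bp: "x \<in> bpoints n \<Longrightarrow> finite x"
  unfolding bpoints_def by (auto intro: finite_subset)

lemma parity_card_sum:
  assumes "finite A"
  shows "odd (card {u\<in>A. odd (N u)}) \<longleftrightarrow> odd (\<Sum>u\<in>A. (N u::nat))"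
  using assms
proof (induction A rule: finite_induct)
  case empty then show ?case by simp
next
  case (insert a A)
  have "{u\<in>insert a A. odd (N u)} = (if odd (N a) then insert a {u\<in>A. odd (N u)} else {u\<in>A. odd (N u)})"
    by auto
  then show ?case using insert by (auto simp: card_insert_if)
qed

lemma card_between:
  assumes "finite x" "y \<subseteq> x"
  shows "card {u\<in>Pow x. y \<subseteq> u} = 2 ^ card (x - y)"
proof -
  have "{u\<in>Pow x. y \<subseteq> u} = (\<lambda>w. w \<union> y) ` Pow (x - y)" 
  proof
    show "{u\<in>Pow x. y \<subseteq> u} \<subseteq> (\<lambda>w. w \<union> y) ` Pow (x - y)"
    proof
      fix u assume "u \<in> {u\<in>Pow x. y \<subseteq> u}"
      then have "u = (u - y) \<union> y" "u - y \<in> Pow (x - y)" by auto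
      then show "u \<in> (\<lambda>w. w \<union> y) ` Pow (x - y)" by blast
    qed
  qed (use assms in auto)
  moreover have "inj_on (\<lambda>w. w \<union> y) (Pow (x - y))"
    by (rule inj_onI) auto
  ultimately show ?thesis using assms
    by (simp add: card_image card_Pow)
qed

lemma K:
  assumes "finite x"
  shows "odd (\<Sum>u\<in>Pow x. \<Sum>y\<in>Pow u. (c y::nat)) \<longleftrightarrow> odd (c x)"
proof -
  have "(\<Sum>u\<in>Pow x. \<Sum>y\<in>Pow u. c y) = (\<Sum>u\<in>Pow x. \<Sum>y\<in>{y\<in>Pow x. y \<subseteq> u}. c y)"
    by (rule sum.cong) (auto intro!: sum.cong)
  also have "\<dots> = (\<Sum>y\<in>Pow x. \<Sum>u\<in>{u\<in>Pow x. y \<subseteq> u}. c y)"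
    using assms by (intro sum.swap_restrict) auto
  also have "\<dots> = (\<Sum>y\<in>Pow x. c y * 2 ^ card (x - y))"
  proof (intro sum.cong refl)
    fix y assume "y \<in> Pow x"
    then show "(\<Sum>u\<in>{u\<in>Pow x. y \<subseteq> u}. c y) = c y * 2 ^ card (x - y)"
      using card_between[OF assms(1), of y] by simp
  qed
  also have "\<dots> = c x * 2 ^ card (x - x) + (\<Sum>y\<in>Pow x - {x}. c y * 2 ^ card (x - y))"
    using assms by (subst sum.remove[of _ x]) auto
  finally have eq: "(\<Sum>u\<in>Pow x. \<Sum>y\<in>Pow u. c y) = c x + (\<Sum>y\<in>Pow x - {x}. c y * 2 ^ card (x - y))"
    by simp
  have "even (\<Sum>y\<in>Pow x - {x}. c y * 2 ^ card (x - y))"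
  proof (rule dvd_sum)
    fix y assume "y \<in> Pow x - {x}"
    then have "x - y \<noteq> {}" by auto
    then have "card (x - y) \<noteq> 0" using assms by auto
    then show "even (c y * 2 ^ card (x - y))" by auto
  qed
  then show ?thesis unfolding eq by auto
qed

lemma alg_deg_le_iff:
  "alg_deg n g \<le> e \<longleftrightarrow> (\<forall>u. u \<subseteq> {..<n} \<and> anf_coeff g u \<longrightarrow> card u \<le> e)"
proof -
  have fin: "finite {card u | u. u \<subseteq> {..<n} \<and> anf_coeff g u}"
  proof -
    have "{card u | u. u \<subseteq> {..<n} \<and> anf_coeff g u} \<subseteq> card ` Pow {..<n}" by auto
    then show ?thesis by (rule finite_subset) auto
  qed
  show ?thesis unfolding alg_deg_def using fin by (subst Max_le_iff) auto
qed

lemma degle_imp_alg_deg: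
  assumes "degle n g e" shows "alg_deg n g \<le> e"
proof -
  obtain c :: "nat set \<Rightarrow> nat" where c: "\<forall>u. c u \<noteq> 0 \<longrightarrow> card u \<le> e" "\<forall>x\<in>bpoints n. g x = odd (\<Sum>u\<in>Pow x. c u)"
    using assms unfolding degle_def by blast
  show ?thesis unfolding alg_deg_le_iff
  proof (intro allI impI)
    fix v assume v: "v \<subseteq> {..<n} \<and> anf_coeff g v"
    have fv: "finite v" using v finite_subset by blast
    have "{x. x \<subseteq> v \<and> g x} = {x\<in>Pow v. odd (\<Sum>u\<in>Pow x. c u)}"
      using v c(2) unfolding bpoints_def by auto
    then have "odd (card {x\<in>Pow v. odd (\<Sum>u\<in>Pow x. c u)})"
      using v unfolding anf_coeff_def by simp
    then have "odd (\<Sum>x\<in>Pow v. \<Sum>u\<in>Pow x. c u)"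
      using parity_card_sum[of "Pow v"] fv by simp
    then have "odd (c v)" using K[OF fv] by simp
    then have "c v \<noteq> 0" by (metis even_zero)
    then show "card v \<le> e" using c(1) by blast
  qed
qed

lemma alg_deg_imp_degle:
  assumes "alg_deg n g \<le> e" shows "degle n g e"
proof -
  define c where "c u = (if u \<subseteq> {..<n} \<and> anf_coeff g u then 1 else (0::nat))" for u
  have 1: "\<forall>u. c u \<noteq> 0 \<longrightarrow> card u \<le> e"
    using assms unfolding alg_deg_le_iff c_def by (auto split: if_splits)
  have 2: "g x = odd (\<Sum>u\<in>Pow x. c u)" if x: "x \<in> bpoints n" for x
  proof -
    have fx: "finite x" using finite_bp[OF x] .
    have xs: "x \<subseteq> {..<n}" using x unfolding bpoints_def by auto
    have "(\<Sum>u\<in>Pow x. c u) = card {u\<in>Pow x. odd (card {y\<in>Pow u. g y})}"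
    proof -
      have "(\<Sum>u\<in>Pow x. c u) = (\<Sum>u\<in>Pow x. if odd (card {y\<in>Pow u. g y}) then 1 else 0)"
      proof (intro sum.cong refl)
        fix u assume "u \<in> Pow x"
        then have "u \<subseteq> {..<n}" using xs by auto
        moreover have "{y. y \<subseteq> u \<and> g y} = {y\<in>Pow u. g y}" by auto
        ultimately show "c u = (if odd (card {y\<in>Pow u. g y}) then 1 else 0)"
          unfolding c_def anf_coeff_def by simp
      qed
      also have "\<dots> = card {u\<in>Pow x. odd (card {y\<in>Pow u. g y})}"
        using fx by (simp add: sum.If_cases) (intro arg_cong[where f=card], auto)
      finally show ?thesis .
    qed
    then have "odd (\<Sum>u\<in>Pow x. c u) \<longleftrightarrow> odd (\<Sum>u\<in>Pow x. card {y\<in>Pow u. g y})"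
      using parity_card_sum[of "Pow x" "\<lambda>u. card {y\<in>Pow u. g y}"] fx by simp
    also have "(\<Sum>u\<in>Pow x. card {y\<in>Pow u. g y}) = (\<Sum>u\<in>Pow x. \<Sum>y\<in>Pow u. (if g y then 1 else 0::nat))"
    proof (intro sum.cong refl)
      fix u assume "u \<in> Pow x"
      then have "finite u" using fx finite_subset by blast
      then show "card {y\<in>Pow u. g y} = (\<Sum>y\<in>Pow u. (if g y then 1 else 0::nat))"
        by (simp add: sum.If_cases) (intro arg_cong[where f=card], auto)
    qed
    finally show ?thesis using K[OF fx, of "\<lambda>y. if g y then 1 else 0"] by simp
  qed
  show ?thesis unfolding degle_def using 1 2 by blast
qed

lemma degle_cong:
  assumes "degle n g e" "\<And>x. x \<in> bpoints n \<Longrightarrow> g x = h x" shows "degle n h e"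
  using assms unfolding degle_def by metis

lemma degle_mono:
  assumes "degle n g e" "e \<le> e'" shows "degle n g e'"
  using assms unfolding degle_def by (meson order_trans)

lemma degle_const: "degle n (\<lambda>_. b) e"
proof -
  define c :: "nat set \<Rightarrow> nat" where "c u = (if u = {} \<and> b then 1 else (0::nat))" for u
  have "(\<Sum>u\<in>Pow x. c u) = (if b then 1 else 0)" if "finite x" for x
  proof -
    have "(\<Sum>u\<in>Pow x. c u) = (\<Sum>u\<in>Pow x. if u = {} then (if b then 1 else 0) else 0)"
      unfolding c_def by (intro sum.cong) auto
    also have "\<dots> = (if b then 1 else 0)" using that by (subst sum.delta) auto
    finally show ?thesis .
  qed
  moreover have "\<forall>u. c u \<noteq> 0 \<longrightarrow> card u \<le> e" by (auto simp: c_def)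
  ultimately have "(\<forall>u. c u \<noteq> 0 \<longrightarrow> card u \<le> e) \<and>
     (\<forall>x\<in>bpoints n. b = odd (\<Sum>u\<in>Pow x. c u))"
    by (metis (full_types) finite_bp odd_one even_zero)
  then show ?thesis unfolding degle_def by blast
qed

lemma degle_xor:
  assumes "degle n g e" "degle n h e" shows "degle n (\<lambda>x. g x \<noteq> h x) e"
proof -
  obtain c :: "nat set \<Rightarrow> nat" where c: "\<forall>u. c u \<noteq> 0 \<longrightarrow> card u \<le> e" "\<forall>x\<in>bpoints n. g x = odd (\<Sum>u\<in>Pow x. c u)"
    using assms(1) unfolding degle_def by blast
  obtain c' :: "nat set \<Rightarrow> nat" where c': "\<forall>u. c' u \<noteq> 0 \<longrightarrow> card u \<le> e" "\<forall>x\<in>bpoints n. h x = odd (\<Sum>u\<in>Pow x. c' u)"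
    using assms(2) unfolding degle_def by blast
  show ?thesis unfolding degle_def
  proof (intro exI[of _ "\<lambda>u. c u + c' u"] conjI ballI allI impI)
    fix u assume "c u + c' u \<noteq> 0" then show "card u \<le> e" using c(1) c'(1) by auto
  next
    fix x assume "x \<in> bpoints n"
    then show "(g x \<noteq> h x) = odd (\<Sum>u\<in>Pow x. c u + c' u)"
      using c(2) c'(2) by (auto simp: sum.distrib)
  qed
qed

lemma degle_and:
  assumes "degle n g e" "degle n h d" shows "degle n (\<lambda>x. g x \<and> h x) (e + d)"
proof -
  obtain c :: "nat set \<Rightarrow> nat" where c: "\<forall>u. c u \<noteq> 0 \<longrightarrow> card u \<le> e" "\<forall>x\<in>bpoints n. g x = odd (\<Sum>u\<in>Pow x. c u)"
    using assms(1) unfolding degle_def by blast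
  obtain c' :: "nat set \<Rightarrow> nat" where c': "\<forall>u. c' u \<noteq> 0 \<longrightarrow> card u \<le> d" "\<forall>x\<in>bpoints n. h x = odd (\<Sum>u\<in>Pow x. c' u)"
    using assms(2) unfolding degle_def by blast
  define C where "C w = (\<Sum>p\<in>{p\<in>Pow w \<times> Pow w. fst p \<union> snd p = w}. c (fst p) * c' (snd p))" for w
  show ?thesis unfolding degle_def
  proof (intro exI[of _ C] conjI ballI allI impI)
    fix w assume "C w \<noteq> 0"
    then obtain p where p: "p \<in> {p\<in>Pow w \<times> Pow w. fst p \<union> snd p = w}" "c (fst p) * c' (snd p) \<noteq> 0"
      unfolding C_def by (meson sum.not_neutral_contains_not_neutral)
    then have "card w \<le> card (fst p) + card (snd p)" using card_Un_le[of "fst p" "snd p"] by auto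
    also have "\<dots> \<le> e + d" using p(2) c(1) c'(1) by (simp add: add_mono)
    finally show "card w \<le> e + d" .
  next
    fix x assume x: "x \<in> bpoints n"
    have fx: "finite x" using finite_bp[OF x] .
    have "(\<Sum>u\<in>Pow x. c u) * (\<Sum>u\<in>Pow x. c' u) = (\<Sum>p\<in>Pow x \<times> Pow x. c (fst p) * c' (snd p))"
      by (simp add: sum_product sum.cartesian_product case_prod_beta)
    also have "\<dots> = (\<Sum>w\<in>Pow x. \<Sum>p\<in>{p. p \<in> Pow x \<times> Pow x \<and> fst p \<union> snd p = w}. c (fst p) * c' (snd p))"
      using fx by (intro sum.group[symmetric]) auto
    also have "\<dots> = (\<Sum>w\<in>Pow x. C w)"
    proof (intro sum.cong refl)
      fix w assume "w \<in> Pow x"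
      then have "{p. p \<in> Pow x \<times> Pow x \<and> fst p \<union> snd p = w} = {p\<in>Pow w \<times> Pow w. fst p \<union> snd p = w}"
        by auto
      then show "(\<Sum>p\<in>{p. p \<in> Pow x \<times> Pow x \<and> fst p \<union> snd p = w}. c (fst p) * c' (snd p)) = C w"
        unfolding C_def by simp
    qed
    finally have eq: "(\<Sum>u\<in>Pow x. c u) * (\<Sum>u\<in>Pow x. c' u) = (\<Sum>w\<in>Pow x. C w)" .
    show "(g x \<and> h x) = odd (\<Sum>w\<in>Pow x. C w)"
      using c(2) c'(2) x unfolding eq[symmetric] by simp
  qed
qed

lemma degle_var: "degle n (\<lambda>z. i \<in> z) 1"
proof -
  define c where "c u = (if u = {i} then 1 else (0::nat))" for u
  have "(\<Sum>u\<in>Pow x. c u) = (if i \<in> x then 1 else 0)" if "finite x" for x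
    unfolding c_def using that by (subst sum.delta) auto
  then show ?thesis unfolding degle_def
    by (intro exI[of _ c]) (auto simp: c_def dest: finite_bp split: if_splits)
qed

lemma degle_lift:
  assumes "degle n g e" shows "degle (Suc n) (\<lambda>z. g (z - {n})) e"
proof -
  obtain c :: "nat set \<Rightarrow> nat" where c: "\<forall>u. c u \<noteq> 0 \<longrightarrow> card u \<le> e" "\<forall>x\<in>bpoints n. g x = odd (\<Sum>u\<in>Pow x. c u)"
    using assms(1) unfolding degle_def by blast
  show ?thesis unfolding degle_def
  proof (intro exI[of _ "\<lambda>u. if n \<in> u then 0 else c u"] conjI ballI allI impI)
    fix u assume "(if n \<in> u then 0 else c u) \<noteq> 0" then show "card u \<le> e"
      using c(1) by (auto split: if_splits)
  next
    fix x assume x: "x \<in> bpoints (Suc n)"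
    have fx: "finite x" using finite_bp[OF x] .
    have "x - {n} \<in> bpoints n" using x unfolding bpoints_def by auto
    then have "g (x - {n}) = odd (\<Sum>u\<in>Pow (x - {n}). c u)" using c(2) by blast
    also have "(\<Sum>u\<in>Pow (x - {n}). c u) = (\<Sum>u\<in>Pow (x - {n}). if n \<in> u then 0 else c u)"
      by (intro sum.cong) auto
    also have "\<dots> = (\<Sum>u\<in>Pow x. if n \<in> u then 0 else c u)"
      using fx by (intro sum.mono_neutral_left) auto
    finally show "g (x - {n}) = odd (\<Sum>u\<in>Pow x. if n \<in> u then 0 else c u)" .
  qed
qed

lemma bpoints_Suc: "bpoints (Suc n) = bpoints n \<union> insert n ` bpoints n"
proof
  show "bpoints (Suc n) \<subseteq> bpoints n \<union> insert n ` bpoints n"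
  proof
    fix x assume x: "x \<in> bpoints (Suc n)"
    show "x \<in> bpoints n \<union> insert n ` bpoints n"
    proof (cases "n \<in> x")
      case True
      then have "x = insert n (x - {n})" "x - {n} \<in> bpoints n" using x unfolding bpoints_def by auto
      then show ?thesis by blast
    next
      case False
      then have "x \<subseteq> {..<n}" using x unfolding bpoints_def by (auto simp: less_Suc_eq)
      then show ?thesis unfolding bpoints_def by auto
    qed
  qed
qed (auto simp: bpoints_def)

lemma inj_insert_bp: "inj_on (insert n) (bpoints n)"
  by (rule inj_onI) (auto simp: bpoints_def insert_ident)

lemma finite_bpoints: "finite (bpoints n)" by (simp add: bpoints_def)

lemma card_bpoints: "card (bpoints n) = 2 ^ n" by (simp add: bpoints_def card_Pow)

lemma hweight_Suc: "hweight (Suc n) g = hweight n g + hweight n (\<lambda>x. g (insert n x))"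
proof -
  have d: "bpoints n \<inter> insert n ` bpoints n = {}" by (auto simp: bpoints_def)
  have "{x \<in> bpoints (Suc n). g x} = {x\<in>bpoints n. g x} \<union> insert n ` {x\<in>bpoints n. g (insert n x)}"
    unfolding bpoints_Suc by auto
  moreover have "card (insert n ` {x\<in>bpoints n. g (insert n x)}) = card {x\<in>bpoints n. g (insert n x)}"
    by (rule card_image) (rule inj_on_subset[OF inj_insert_bp], auto)
  moreover have "card ({x\<in>bpoints n. g x} \<union> insert n ` {x\<in>bpoints n. g (insert n x)}) =
     card {x\<in>bpoints n. g x} + card (insert n ` {x\<in>bpoints n. g (insert n x)})"
    by (rule card_Un_disjoint) (use d finite_bpoints in auto)
  ultimately show ?thesis unfolding hweight_def by simp
qed

lemma sum_Pow_insert: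
  assumes "finite x" "n \<notin> x"
  shows "(\<Sum>u\<in>Pow (insert n x). (c u::nat)) = (\<Sum>u\<in>Pow x. c u) + (\<Sum>u\<in>Pow x. c (insert n u))"
proof -
  have "(\<Sum>u\<in>Pow (insert n x). c u) = (\<Sum>u\<in>Pow x \<union> insert n ` Pow x. c u)"
    by (simp add: Pow_insert)
  also have "\<dots> = (\<Sum>u\<in>Pow x. c u) + (\<Sum>u\<in>insert n ` Pow x. c u)"
    using assms by (intro sum.union_disjoint) auto
  also have "(\<Sum>u\<in>insert n ` Pow x. c u) = (\<Sum>u\<in>Pow x. c (insert n u))"
  proof (rule sum.reindex_cong[OF _ refl refl])
    show "inj_on (insert n) (Pow x)" using assms by (intro inj_onI) (auto simp: insert_ident)
  qed
  finally show ?thesis .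
qed

lemma degle_restr: "degle (Suc n) g e \<Longrightarrow> degle n g e"
  unfolding degle_def bpoints_Suc by blast

lemma degle_top:
  assumes "degle (Suc n) g e" shows "degle n (\<lambda>x. g (insert n x)) e"
proof -
  obtain c :: "nat set \<Rightarrow> nat" where c: "\<forall>u. c u \<noteq> 0 \<longrightarrow> card u \<le> e" "\<forall>x\<in>bpoints (Suc n). g x = odd (\<Sum>u\<in>Pow x. c u)"
    using assms(1) unfolding degle_def by blast
  show ?thesis unfolding degle_def
  proof (intro exI[of _ "\<lambda>u. c u + (if n \<in> u then 0 else c (insert n u))"] conjI ballI allI impI)
    fix u assume "c u + (if n \<in> u then 0 else c (insert n u)) \<noteq> 0"
    then consider "c u \<noteq> 0" | "c (insert n u) \<noteq> 0" "n \<notin> u" by (auto split: if_splits)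
    then show "card u \<le> e"
    proof cases
      case 1 then show ?thesis using c(1) by auto
    next
      case 2
      then have "card (insert n u) \<le> e" using c(1) by auto
      then show ?thesis by (meson card_insert_le order_trans)
    qed
  next
    fix x assume x: "x \<in> bpoints n"
    have fx: "finite x" using finite_bp[OF x] .
    have nx: "n \<notin> x" using x by (auto simp: bpoints_def)
    have "insert n x \<in> bpoints (Suc n)" unfolding bpoints_Suc using x by blast
    then have "g (insert n x) = odd (\<Sum>u\<in>Pow (insert n x). c u)" using c(2) by blast
    also have "(\<Sum>u\<in>Pow (insert n x). c u) = (\<Sum>u\<in>Pow x. c u + (if n \<in> u then 0 else c (insert n u)))"
      using sum_Pow_insert[OF fx nx] nx by (auto simp: sum.distrib intro!: sum.cong)
    finally show "g (insert n x) = odd (\<Sum>u\<in>Pow x. c u + (if n \<in> u then 0 else c (insert n u)))" .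
  qed
qed

lemma degle_deriv:
  assumes "degle (Suc n) g (Suc e)" shows "degle n (\<lambda>x. g x \<noteq> g (insert n x)) e"
proof -
  obtain c :: "nat set \<Rightarrow> nat" where c: "\<forall>u. c u \<noteq> 0 \<longrightarrow> card u \<le> Suc e" "\<forall>x\<in>bpoints (Suc n). g x = odd (\<Sum>u\<in>Pow x. c u)"
    using assms(1) unfolding degle_def by blast
  show ?thesis unfolding degle_def
  proof (intro exI[of _ "\<lambda>u. (if n \<in> u then 0 else c (insert n u))"] conjI ballI allI impI)
    fix u assume "(if n \<in> u then 0 else c (insert n u)) \<noteq> 0"
    then have "c (insert n u) \<noteq> 0" "n \<notin> u" by (auto split: if_splits)
    then have "card (insert n u) \<le> Suc e" "n \<notin> u" using c(1) by auto
    then show "card u \<le> e" by (cases "finite u") auto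
  next
    fix x assume x: "x \<in> bpoints n"
    have fx: "finite x" using finite_bp[OF x] .
    have nx: "n \<notin> x" using x by (auto simp: bpoints_def)
    have "insert n x \<in> bpoints (Suc n)" "x \<in> bpoints (Suc n)" unfolding bpoints_Suc using x by blast+
    then have "g (insert n x) = odd (\<Sum>u\<in>Pow (insert n x). c u)" "g x = odd (\<Sum>u\<in>Pow x. c u)" using c(2) by blast+
    moreover have "(\<Sum>u\<in>Pow x. c (insert n u)) = (\<Sum>u\<in>Pow x. (if n \<in> u then 0 else c (insert n u)))"
      using nx by (auto intro!: sum.cong)
    ultimately show "(g x \<noteq> g (insert n x)) = odd (\<Sum>u\<in>Pow x. (if n \<in> u then 0 else c (insert n u)))"
      using sum_Pow_insert[OF fx nx, of c] by auto
  qed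
qed

lemma degle_zero_const:
  assumes "degle n g 0" "x \<in> bpoints n" "y \<in> bpoints n" shows "g x = g y"
proof -
  obtain c :: "nat set \<Rightarrow> nat" where c: "\<forall>u. c u \<noteq> 0 \<longrightarrow> card u \<le> 0" "\<forall>x\<in>bpoints n. g x = odd (\<Sum>u\<in>Pow x. c u)"
    using assms(1) unfolding degle_def by blast
  have "(\<Sum>u\<in>Pow z. c u) = c {}" if "z \<in> bpoints n" for z
  proof -
    have fz: "finite z" using finite_bp[OF that] .
    have "(\<Sum>u\<in>Pow z. c u) = (\<Sum>u\<in>{{}}. c u)"
    proof (rule sum.mono_neutral_right)
      show "\<forall>i\<in>Pow z - {{}}. c i = 0"
      proof
        fix i assume i: "i \<in> Pow z - {{}}"
        then have "finite i" "i \<noteq> {}" using fz finite_subset by auto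
        then show "c i = 0" using c(1) by (metis card_0_eq le_zero_eq)
      qed
    qed (use fz in auto)
    then show ?thesis by simp
  qed
  then show ?thesis using c(2) assms(2,3) by metis
qed

lemma hweight_pos: "(\<exists>x\<in>bpoints n. g x) \<Longrightarrow> hweight n g \<ge> 1"
proof -
  assume "\<exists>x\<in>bpoints n. g x"
  then obtain x where "x \<in> {x\<in>bpoints n. g x}" by blast
  moreover have "finite {x\<in>bpoints n. g x}" using finite_bpoints by simp
  ultimately have "card {x\<in>bpoints n. g x} > 0" using card_gt_0_iff by blast
  then show ?thesis unfolding hweight_def by simp
qed

lemma weight_bound:
  "degle n g e \<Longrightarrow> (\<exists>x\<in>bpoints n. g x) \<Longrightarrow> 2 ^ n \<le> 2 ^ e * hweight n g"
proof (induction n arbitrary: g e)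
  case 0
  then have "hweight 0 g \<ge> 1" using hweight_pos by blast
  then show ?case by (metis mult_le_mono nat_mult_1_right one_le_numeral one_le_power power_0)
next
  case (Suc n)
  show ?case
  proof (cases e)
    case 0
    obtain x where x: "x \<in> bpoints (Suc n)" "g x" using Suc.prems by blast
    have "\<forall>y\<in>bpoints (Suc n). g y" using degle_zero_const[of "Suc n" g x] Suc.prems(1) x 0 by blast
    then have "{y\<in>bpoints (Suc n). g y} = bpoints (Suc n)" by auto
    then show ?thesis using 0 by (simp add: hweight_def card_bpoints)
  next
    case (Suc e')
    define g0 where "g0 = g"
    define gT where "gT = (\<lambda>x. g (insert n x))"
    define g1 where "g1 = (\<lambda>x. g x \<noteq> g (insert n x))"
    have d0: "degle n g0 e" unfolding g0_def using degle_restr Suc.prems(1) by blast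
    have dT: "degle n gT e" unfolding gT_def using degle_top Suc.prems(1) by blast
    have d1: "degle n g1 e'" unfolding g1_def using degle_deriv Suc.prems(1) Suc by blast
    have w: "hweight (Suc n) g = hweight n g0 + hweight n gT" unfolding g0_def gT_def by (rule hweight_Suc)
    have ex: "(\<exists>x\<in>bpoints n. g0 x) \<or> (\<exists>x\<in>bpoints n. gT x)"
      using Suc.prems(2) unfolding bpoints_Suc g0_def gT_def by blast
    consider "(\<exists>x\<in>bpoints n. g0 x)" "(\<exists>x\<in>bpoints n. gT x)" | "\<not>(\<exists>x\<in>bpoints n. g0 x)" | "\<not>(\<exists>x\<in>bpoints n. gT x)"
      by blast
    then show ?thesis
    proof cases
      case 1
      then have "2 ^ n \<le> 2 ^ e * hweight n g0" "2 ^ n \<le> 2 ^ e * hweight n gT"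
        using Suc.IH d0 dT by blast+
      then show ?thesis unfolding w by (simp add: algebra_simps)
    next
      case 2
      then have "\<forall>x\<in>bpoints n. g1 x = gT x" unfolding g1_def g0_def gT_def by auto
      then have "hweight n g1 = hweight n gT" unfolding hweight_def
        by (metis (mono_tags, lifting) Collect_cong)
      moreover have "\<exists>x\<in>bpoints n. g1 x" using 2 ex \<open>\<forall>x\<in>bpoints n. g1 x = gT x\<close> by blast
      ultimately have "2 ^ n \<le> 2 ^ e' * hweight n gT" using Suc.IH d1 by metis
      then show ?thesis unfolding w using Suc by (simp add: add_mult_distrib2 trans_le_add2)
    next
      case 3
      then have "\<forall>x\<in>bpoints n. g1 x = g0 x" unfolding g1_def g0_def gT_def by auto
      then have "hweight n g1 = hweight n g0" unfolding hweight_def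
        by (metis (mono_tags, lifting) Collect_cong)
      moreover have "\<exists>x\<in>bpoints n. g1 x" using 3 ex \<open>\<forall>x\<in>bpoints n. g1 x = g0 x\<close> by blast
      ultimately have "2 ^ n \<le> 2 ^ e' * hweight n g0" using Suc.IH d1 by metis
      then show ?thesis unfolding w using Suc by (simp add: add_mult_distrib2 trans_le_add1)
    qed
  qed
qed

lemma interp0:
  assumes "finite T" "card T < 2" shows "\<exists>h. degle n h d \<and> (\<forall>y\<in>T. h y = v y)"
proof -
  have "card T \<le> 1" using assms by simp
  obtain t where "\<forall>y\<in>T. y = t"
  proof (cases "T = {}")
    case False
    then obtain t where "t \<in> T" by blast
    then show ?thesis using that \<open>card T \<le> 1\<close> assms(1) card_le_Suc0_iff_eq[of T] by auto
  qed auto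
  then show ?thesis using degle_const[of n "v t" d] by auto
qed

lemma degle_notvar: "degle n (\<lambda>z. i \<notin> z) 1"
proof -
  have "degle n (\<lambda>z. True \<noteq> (i \<in> z)) 1" by (rule degle_xor[OF degle_const degle_var])
  then show ?thesis by simp
qed

lemma interp:
  "T \<subseteq> bpoints n \<Longrightarrow> card T < 2 ^ Suc d \<Longrightarrow> \<exists>h. degle n h d \<and> (\<forall>y\<in>T. h y = v y)"
proof (induction n arbitrary: d T v)
  case 0
  then have "\<forall>y\<in>T. y = {}" by (auto simp: bpoints_def)
  then show ?case using degle_const[of 0 "v {}" d] by auto
next
  case (Suc n)
  have fT: "finite T" using Suc.prems(1) finite_bpoints finite_subset by blast
  show ?case
  proof (cases d)
    case 0 then show ?thesis using interp0[OF fT] Suc.prems(2) by simp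
  next
    case (Suc d')
    define T0 where "T0 = {y\<in>T. n \<notin> y}"
    define T1 where "T1 = {y\<in>T. n \<in> y}"
    define T1' where "T1' = (\<lambda>y. y - {n}) ` T1"
    have cT: "card T0 + card T1 = card T"
    proof -
      have "T = T0 \<union> T1" "T0 \<inter> T1 = {}" unfolding T0_def T1_def by auto
      then show ?thesis using fT card_Un_disjoint[of T0 T1] by (metis finite_Un)
    qed
    have cT1: "card T1' \<le> card T1" unfolding T1'_def by (rule card_image_le) (use fT T1_def in auto)
    have T0b: "T0 \<subseteq> bpoints n" using Suc.prems(1) unfolding T0_def bpoints_def
      by (force simp: less_Suc_eq subset_iff)
    have T1b: "T1' \<subseteq> bpoints n" using Suc.prems(1) unfolding T1'_def T1_def bpoints_def
      by (force simp: less_Suc_eq subset_iff)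
    have ins: "y = insert n (y - {n})" "y - {n} \<in> T1'" if "y \<in> T1" for y
      using that unfolding T1_def T1'_def by auto
    have T0n: "y - {n} = y" if "y \<in> T0" for y using that unfolding T0_def by auto
    have "card T0 < 2 ^ d \<or> card T1 < 2 ^ d" using cT Suc.prems(2) by auto
    then show ?thesis
    proof
      assume c1: "card T1 < 2 ^ d"
      obtain h' where h': "degle n h' d" "\<forall>y\<in>T0. h' y = v y"
        using Suc.IH[OF T0b, of d v] Suc.prems(2) cT by fastforce
      obtain h'' where h'': "degle n h'' d'" "\<forall>y\<in>T1'. h'' y = (h' y \<noteq> v (insert n y))"
        using Suc.IH[OF T1b, of d' "\<lambda>y. h' y \<noteq> v (insert n y)"] c1 cT1 \<open>d = Suc d'\<close> by fastforce
      define h where "h z = (h' (z - {n}) \<noteq> (n \<in> z \<and> h'' (z - {n})))" for z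
      have "degle (Suc n) (\<lambda>z. n \<in> z \<and> h'' (z - {n})) (1 + d')"
        by (rule degle_and[OF degle_var degle_lift[OF h''(1)]])
      then have "degle (Suc n) h d" unfolding h_def using \<open>d = Suc d'\<close>
        by (intro degle_xor degle_lift h'(1)) simp
      moreover have "\<forall>y\<in>T. h y = v y"
      proof
        fix y assume "y \<in> T"
        then have "y \<in> T0 \<or> y \<in> T1" unfolding T0_def T1_def by auto
        then show "h y = v y"
        proof
          assume y: "y \<in> T0"
          then show ?thesis using T0n[OF y] h'(2) unfolding h_def T0_def by auto
        next
          assume y: "y \<in> T1"
          then have "n \<in> y" unfolding T1_def by auto
          then show ?thesis using ins[OF y] h''(2) unfolding h_def by metis
        qed
      qed
      ultimately show ?thesis by blast
    next
      assume c0: "card T0 < 2 ^ d"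
      obtain h' where h': "degle n h' d" "\<forall>y\<in>T1'. h' y = v (insert n y)"
        using Suc.IH[OF T1b, of d "\<lambda>y. v (insert n y)"] Suc.prems(2) cT cT1 by fastforce
      obtain h'' where h'': "degle n h'' d'" "\<forall>y\<in>T0. h'' y = (h' y \<noteq> v y)"
        using Suc.IH[OF T0b, of d' "\<lambda>y. h' y \<noteq> v y"] c0 \<open>d = Suc d'\<close> by fastforce
      define h where "h z = (h' (z - {n}) \<noteq> (n \<notin> z \<and> h'' (z - {n})))" for z
      have "degle (Suc n) (\<lambda>z. n \<notin> z \<and> h'' (z - {n})) (1 + d')"
        by (rule degle_and[OF degle_notvar degle_lift[OF h''(1)]])
      then have "degle (Suc n) h d" unfolding h_def using \<open>d = Suc d'\<close>
        by (intro degle_xor degle_lift h'(1)) simp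
      moreover have "\<forall>y\<in>T. h y = v y"
      proof
        fix y assume "y \<in> T"
        then have "y \<in> T0 \<or> y \<in> T1" unfolding T0_def T1_def by auto
        then show "h y = v y"
        proof
          assume y: "y \<in> T0"
          then have "n \<notin> y" unfolding T0_def by auto
          then show ?thesis using T0n[OF y] h''(2) y unfolding h_def by auto
        next
          assume y: "y \<in> T1"
          then have "n \<in> y" unfolding T1_def by auto
          then show ?thesis using ins[OF y] h'(2) unfolding h_def by metis
        qed
      qed
      ultimately show ?thesis by blast
    qed
  qed
qed


lemma LDA_witness:
  assumes "LDA n h = enat k"
  shows "\<exists>g. bf_nonzero n g \<and> annihilates n g h \<and> alg_deg n g = k"
proof -
  let ?A = "{enat (alg_deg n g) | g. bf_nonzero n g \<and> annihilates n g h}"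
  have ne: "?A \<noteq> {}"
  proof
    assume "?A = {}"
    then have "LDA n h = \<infinity>" unfolding LDA_def by (simp only: Inf_empty top_enat_def)
    then show False using assms by simp
  qed
  then obtain a where a: "a \<in> ?A" by blast
  have "(LEAST x. x \<in> ?A) \<in> ?A" by (rule LeastI[of "\<lambda>x. x \<in> ?A", OF a])
  then have "Inf ?A \<in> ?A" unfolding Inf_enat_def using ne by simp
  then show ?thesis using assms unfolding LDA_def by auto
qed

lemma LDA_le: "bf_nonzero n g \<Longrightarrow> annihilates n g h \<Longrightarrow> LDA n h \<le> enat (alg_deg n g)"
  unfolding LDA_def by (rule Inf_lower) blast

lemma core:
  assumes L: "LDA n h = enat k" and w1: "hweight n \<delta> < 2 ^ (n - k)" and w2: "hweight n \<delta> + 1 < 2 ^ Suc d"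
  shows "LDA n (bf_add h \<delta>) \<le> enat (k + d)"
proof -
  obtain g where g: "bf_nonzero n g" "annihilates n g h" "alg_deg n g = k" using LDA_witness[OF L] by blast
  have dg: "degle n g k" using alg_deg_imp_degle g(3) by simp
  have nz: "\<exists>x\<in>bpoints n. g x" using g(1) unfolding bf_nonzero_def .
  have wb: "2 ^ n \<le> 2 ^ k * hweight n g" using weight_bound[OF dg nz] .
  have wg: "2 ^ (n - k) \<le> hweight n g"
  proof (cases "k \<le> n")
    case True
    then have "(2::nat) ^ n = 2 ^ k * 2 ^ (n - k)" by (metis le_add_diff_inverse power_add)
    then have "(2::nat) ^ k * 2 ^ (n - k) \<le> 2 ^ k * hweight n g" using wb by metis
    then show ?thesis by (simp only: mult_le_cancel1) simp
  next
    case False then show ?thesis using hweight_pos[OF nz] by simp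
  qed
  obtain x where x: "x \<in> bpoints n" "g x" "\<not> \<delta> x"
  proof (rule ccontr)
    assume "\<not> thesis"
    then have "{x\<in>bpoints n. g x} \<subseteq> {x\<in>bpoints n. \<delta> x}" using that by blast
    then have "hweight n g \<le> hweight n \<delta>" unfolding hweight_def
      by (intro card_mono) (auto simp: finite_bpoints)
    then show False using wg w1 by simp
  qed
  define T where "T = insert x {y\<in>bpoints n. \<delta> y}"
  have "card T \<le> hweight n \<delta> + 1" unfolding T_def hweight_def
    by (simp add: card_insert_if finite_bpoints)
  then have cT: "card T < 2 ^ Suc d" using w2 by simp
  have Tb: "T \<subseteq> bpoints n" unfolding T_def using x by auto
  obtain h0 where h0: "degle n h0 d" "\<forall>y\<in>T. h0 y = (y = x)" using interp[OF Tb cT, where v="\<lambda>y. y = x"] by blast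
  define G where "G y = (g y \<and> h0 y)" for y
  have dG: "degle n G (k + d)" unfolding G_def by (rule degle_and[OF dg h0(1)])
  have "bf_nonzero n G" unfolding bf_nonzero_def G_def using x h0(2) T_def by auto
  moreover have "annihilates n G (bf_add h \<delta>)" unfolding annihilates_def
  proof
    fix y assume y: "y \<in> bpoints n"
    show "\<not> (bf_add h \<delta> y \<and> G y)"
    proof
      assume a: "bf_add h \<delta> y \<and> G y"
      then have "g y" "h0 y" unfolding G_def by auto
      have "\<not> \<delta> y"
      proof
        assume "\<delta> y" then have "y \<in> T" "y \<noteq> x" unfolding T_def using y x by auto
        then show False using h0(2) \<open>h0 y\<close> by auto
      qed
      then have "h y" using a unfolding bf_add_def by auto
      then show False using g(2) y \<open>g y\<close> unfolding annihilates_def by blast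
    qed
  qed
  ultimately have "LDA n (bf_add h \<delta>) \<le> enat (alg_deg n G)" by (rule LDA_le)
  also have "\<dots> \<le> enat (k + d)" using degle_imp_alg_deg[OF dG] by simp
  finally show ?thesis .
qed

lemma UB:
  assumes "AI n f = enat k" "hweight n \<delta> < 2 ^ (n - k)" "hweight n \<delta> + 1 < 2 ^ Suc d"
  shows "AI n (bf_add f \<delta>) \<le> enat (k + d)"
proof -
  have "LDA n f = enat k \<or> LDA n (bf_add bf_one f) = enat k"
    using assms(1) unfolding AI_def by (cases "LDA n f \<le> LDA n (bf_add bf_one f)") (simp_all add: min_def)
  then show ?thesis
  proof
    assume "LDA n f = enat k"
    then have "LDA n (bf_add f \<delta>) \<le> enat (k + d)" using core assms(2,3) by blast
    then show ?thesis unfolding AI_def by (meson min.coboundedI1)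
  next
    assume "LDA n (bf_add bf_one f) = enat k"
    then have "LDA n (bf_add (bf_add bf_one f) \<delta>) \<le> enat (k + d)" using core assms(2,3) by blast
    moreover have "bf_add (bf_add bf_one f) \<delta> = bf_add bf_one (bf_add f \<delta>)"
      unfolding bf_add_def bf_one_def by auto
    ultimately show ?thesis unfolding AI_def by (metis min.coboundedI2)
  qed
qed

lemma AI_finite: "\<exists>k'. AI n F = enat k'"
proof -
  have "\<exists>m. AI n F \<le> enat m"
  proof (cases "\<exists>x\<in>bpoints n. \<not> F x")
    case True
    then have "bf_nonzero n (\<lambda>y. \<not> F y)" "annihilates n (\<lambda>y. \<not> F y) F"
      unfolding bf_nonzero_def annihilates_def by auto
    then have "LDA n F \<le> enat (alg_deg n (\<lambda>y. \<not> F y))" by (rule LDA_le)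
    then show ?thesis unfolding AI_def by (meson min.coboundedI1)
  next
    case False
    have "{} \<in> bpoints n" by (simp add: bpoints_def)
    then have "bf_nonzero n bf_one" "annihilates n bf_one (bf_add bf_one F)"
      using False unfolding bf_nonzero_def annihilates_def bf_one_def bf_add_def by auto
    then have "LDA n (bf_add bf_one F) \<le> enat (alg_deg n bf_one)" by (rule LDA_le)
    then show ?thesis unfolding AI_def by (meson min.coboundedI2)
  qed
  then show ?thesis using enat_ile by blast
qed

theorem proposition12:
  fixes n k d :: nat and f \<delta> :: "nat set \<Rightarrow> bool"
  assumes "k > 0" and "d > 0"
    and "AI n f = enat k"
    and "hweight n \<delta> < min (2 ^ (n - k)) (2 ^ (d + 1) - 1)"
  shows "\<exists>k'. AI n (bf_add f \<delta>) = enat k' \<and> \<bar>int k' - int k\<bar> \<le> int d"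
proof -
  obtain k' where k': "AI n (bf_add f \<delta>) = enat k'" using AI_finite by blast
  have w1: "hweight n \<delta> < 2 ^ (n - k)" and w2: "hweight n \<delta> + 1 < 2 ^ Suc d"
    using assms(4) by auto
  have "AI n (bf_add f \<delta>) \<le> enat (k + d)" by (rule UB[OF assms(3) w1 w2])
  then have a: "k' \<le> k + d" using k' by simp
  have b: "k \<le> k' + d"
  proof (rule ccontr)
    assume "\<not> k \<le> k' + d"
    then have "k' < k" by simp
    then have "(2::nat) ^ (n - k) \<le> 2 ^ (n - k')" by (intro power_increasing) auto
    then have w1': "hweight n \<delta> < 2 ^ (n - k')" by (rule less_le_trans[OF w1])
    have "AI n (bf_add (bf_add f \<delta>) \<delta>) \<le> enat (k' + d)" by (rule UB[OF k' w1' w2])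
    moreover have "bf_add (bf_add f \<delta>) \<delta> = f" unfolding bf_add_def by auto
    ultimately have "k \<le> k' + d" using assms(3) by simp
    then show False using \<open>\<not> k \<le> k' + d\<close> by simp
  qed
  show ?thesis using k' a b by auto
qed

end
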